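(* Let $f(X)=N(N-1)\sum_{i=1}^{\ell}\beta_i\,t(H_i,X)$ be a subgraph-counting function. Then for all $X,Y\in[0,1]^n$, $$\|\nabla f(X)-\nabla f(Y)\|_1\le C\,\|X-Y\|_1,\qquad C=12\sum_{i=1}^{\ell}|\beta_i|\,|E(H_i)|^2.$$
   Context: $n=\binom N2$; $X\in[0,1]^n$ is identified with a symmetric $N\times N$ matrix with zero diagonal, entries indexed by unordered pairs. For a finite simple graph $H$ on $[m]$, $t(H,X)=\frac{1}{N(N-1)\cdots(N-m+1)}\sum_q\prod_{\{l,l'\}\in E(H)}X_{q_lq_{l'}}$ over injective $q:[m]\to[N]$. For an index $e$, $\partial_ef(X)=\frac12(f(X^{e\leftarrow1})-f(X^{e\leftarrow0}))$ ($X^{e\leftarrow a}$: coordinate $e$ replaced by $a$), $\nabla f(X)=(\partial_ef(X))_e\in\mathbb R^n$. $\|\cdot\|_1$ is the $\ell^1$ norm on $\mathbb R^n$. *)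

theory Defs
  imports "HOL-Library.FuncSet" Complex_Main
begin

text \<open>Coordinates are indexed by unordered pairs {i,j} of distinct vertices in {0..<N}.
  A point X of [0,1]^n is a function on such pairs (values elsewhere are irrelevant).\<close>

definition pairs :: "nat \<Rightarrow> nat set set" where
  "pairs N = {e. e \<subseteq> {..<N} \<and> card e = 2}"

definition in_cube :: "nat \<Rightarrow> (nat set \<Rightarrow> real) \<Rightarrow> bool" where
  "in_cube N X \<longleftrightarrow> (\<forall>e\<in>pairs N. 0 \<le> X e \<and> X e \<le> 1)"

definition simple_graph :: "nat \<Rightarrow> nat set set \<Rightarrow> bool" where
  "simple_graph m E \<longleftrightarrow> E \<subseteq> pairs m"

definition tdens :: "nat \<Rightarrow> nat \<Rightarrow> nat set set \<Rightarrow> (nat set \<Rightarrow> real) \<Rightarrow> real" where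
  "tdens N m E X =
     (\<Sum>q\<in>{q. q \<in> {..<m} \<rightarrow>\<^sub>E {..<N} \<and> inj_on q {..<m}}. \<Prod>e\<in>E. X (q ` e))
     / (\<Prod>k<m. real N - real k)"

definition subgraph_count ::
  "nat \<Rightarrow> nat \<Rightarrow> (nat \<Rightarrow> real) \<Rightarrow> (nat \<Rightarrow> nat) \<Rightarrow> (nat \<Rightarrow> nat set set) \<Rightarrow> (nat set \<Rightarrow> real) \<Rightarrow> real" where
  "subgraph_count N l \<beta> m EH X = real N * (real N - 1) * (\<Sum>i<l. \<beta> i * tdens N (m i) (EH i) X)"

definition discrete_partial :: "((nat set \<Rightarrow> real) \<Rightarrow> real) \<Rightarrow> nat set \<Rightarrow> (nat set \<Rightarrow> real) \<Rightarrow> real" where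
  "discrete_partial f e X = (f (X(e := 1)) - f (X(e := 0))) / 2"

definition l1_dist :: "nat \<Rightarrow> (nat set \<Rightarrow> real) \<Rightarrow> (nat set \<Rightarrow> real) \<Rightarrow> real" where
  "l1_dist N u v = (\<Sum>e\<in>pairs N. \<bar>u e - v e\<bar>)"

end

theory Submission
  imports Defs
begin

definition injs :: "nat \<Rightarrow> nat \<Rightarrow> (nat \<Rightarrow> nat) set" where
  "injs N m = {q. q \<in> {..<m} \<rightarrow>\<^sub>E {..<N} \<and> inj_on q {..<m}}"

definition PP :: "nat set set \<Rightarrow> (nat \<Rightarrow> nat) \<Rightarrow> (nat set \<Rightarrow> real) \<Rightarrow> real" where
  "PP E q X = (\<Prod>e\<in>E. X (q ` e))"

lemma tdens_eq: "tdens N m E X = (\<Sum>q\<in>injs N m. PP E q X) / (\<Prod>k<m. real N - real k)"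
  by (simp add: tdens_def injs_def PP_def)

lemma finite_injs: "finite (injs N m)"
proof -
  have "injs N m \<subseteq> {..<m} \<rightarrow>\<^sub>E {..<N}" by (auto simp: injs_def)
  moreover have "finite ({..<m} \<rightarrow>\<^sub>E {..<N})" by (rule finite_PiE) auto
  ultimately show ?thesis by (rule finite_subset)
qed

lemma finite_pairs: "finite (pairs N)"
proof -
  have "pairs N \<subseteq> Pow {..<N}" by (auto simp: pairs_def)
  then show ?thesis by (rule finite_subset) auto
qed

lemma img_pairs:
  assumes "a \<in> pairs m" "q \<in> injs N m"
  shows "q ` a \<in> pairs N"
proof -
  have a: "a \<subseteq> {..<m}" "card a = 2" using assms(1) by (auto simp: pairs_def)
  have "inj_on q a" using assms(2) a(1) by (auto simp: injs_def intro: inj_on_subset)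
  then have "card (q ` a) = 2" using a by (simp add: card_image)
  moreover have "q ` a \<subseteq> {..<N}" using assms(2) a(1) by (auto simp: injs_def PiE_iff)
  ultimately show ?thesis by (simp add: pairs_def)
qed

lemma card_injs: "card (injs N m) = (\<Prod>k<m. N - k)"
proof (induction m)
  case 0
  have "injs N 0 = {\<lambda>_. undefined}" by (auto simp: injs_def PiE_empty_domain)
  then show ?case by simp
next
  case (Suc m)
  let ?S = "SIGMA q:injs N m. {..<N} - q ` {..<m}"
  have bij: "bij_betw (\<lambda>q. (restrict q {..<m}, q m)) (injs N (Suc m)) ?S"
    unfolding bij_betw_def
  proof
    show "inj_on (\<lambda>q. (restrict q {..<m}, q m)) (injs N (Suc m))"
    proof (rule inj_onI)
      fix q q' assume q: "q \<in> injs N (Suc m)" and q': "q' \<in> injs N (Suc m)"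
        and eq: "(restrict q {..<m}, q m) = (restrict q' {..<m}, q' m)"
      show "q = q'"
      proof
        fix x
        show "q x = q' x"
        proof (cases "x < m")
          case True then show ?thesis using eq by (metis prod.inject restrict_apply' lessThan_iff)
        next
          case False
          show ?thesis
          proof (cases "x = m")
            case True then show ?thesis using eq by simp
          next
            case False
            then have "x \<notin> {..<Suc m}" using \<open>\<not> x < m\<close> by auto
            then show ?thesis using q q' by (auto simp: injs_def PiE_def extensional_def)
          qed
        qed
      qed
    qed
  next
    show "(\<lambda>q. (restrict q {..<m}, q m)) ` injs N (Suc m) = ?S"
    proof
      show "(\<lambda>q. (restrict q {..<m}, q m)) ` injs N (Suc m) \<subseteq> ?S"
      proof (rule image_subsetI)
        fix q assume q: "q \<in> injs N (Suc m)"
        have "restrict q {..<m} \<in> injs N m"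
          using q by (auto simp: injs_def PiE_iff inj_on_def)
        moreover have "q m \<in> {..<N} - restrict q {..<m} ` {..<m}"
        proof -
          have i: "inj_on q {..<Suc m}" and r: "\<forall>i<Suc m. q i < N" using q by (auto simp: injs_def PiE_iff)
          have "q m \<notin> q ` {..<m}"
          proof
            assume "q m \<in> q ` {..<m}"
            then obtain x where x: "x < m" "q m = q x" by auto
            have "m = x" using inj_onD[OF i x(2)] x(1) by simp
            then show False using x(1) by simp
          qed
          then show ?thesis using r by auto
        qed
        ultimately show "(restrict q {..<m}, q m) \<in> ?S" by auto
      qed
    next
      show "?S \<subseteq> (\<lambda>q. (restrict q {..<m}, q m)) ` injs N (Suc m)"
      proof (rule subsetI)
        fix z assume "z \<in> ?S"
        then obtain p y where z: "z = (p, y)" and p: "p \<in> injs N m" and y: "y \<in> {..<N}" "y \<notin> p ` {..<m}" by auto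
        have "p(m := y) \<in> injs N (Suc m)"
          using p y by (auto simp: injs_def PiE_iff inj_on_def extensional_def less_Suc_eq)
        moreover have "restrict (p(m := y)) {..<m} = p"
          using p by (auto simp: injs_def PiE_iff extensional_def restrict_def)
        ultimately show "z \<in> (\<lambda>q. (restrict q {..<m}, q m)) ` injs N (Suc m)"
          unfolding z by (metis (no_types, lifting) fun_upd_same image_eqI)
      qed
    qed
  qed
  have "card (injs N (Suc m)) = card ?S" using bij by (rule bij_betw_same_card)
  also have "\<dots> = (\<Sum>q\<in>injs N m. card ({..<N} - q ` {..<m}))"
    using finite_injs by (simp add: card_SigmaI)
  also have "\<dots> = (\<Sum>q\<in>injs N m. N - m)"
  proof (rule sum.cong)
    fix q assume q: "q \<in> injs N m"
    have "q ` {..<m} \<subseteq> {..<N}" using q by (auto simp: injs_def PiE_iff)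
    moreover have "card (q ` {..<m}) = m" using q by (simp add: injs_def card_image)
    ultimately show "card ({..<N} - q ` {..<m}) = N - m" by (simp add: card_Diff_subset)
  qed simp
  also have "\<dots> = (\<Prod>k<Suc m. N - k)" using Suc by simp
  finally show ?case .
qed

definition sw :: "nat \<Rightarrow> nat \<Rightarrow> nat \<Rightarrow> nat" where
  "sw a b x = (if x = a then b else if x = b then a else x)"

lemma sw_inj: "inj (sw a b)"
  by (auto simp: inj_def sw_def split: if_splits)

lemma pairs_perm:
  assumes "e1 \<in> pairs N" "e2 \<in> pairs N"
  shows "\<exists>\<tau>. inj \<tau> \<and> \<tau> ` {..<N} \<subseteq> {..<N} \<and> \<tau> ` e1 = e2"
proof -
  obtain x y where e1: "e1 = {x, y}" "x \<noteq> y" using assms(1) by (auto simp: pairs_def card_2_iff)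
  obtain z w where e2: "e2 = {z, w}" "z \<noteq> w" using assms(2) by (auto simp: pairs_def card_2_iff)
  have lt: "x < N" "y < N" "z < N" "w < N" using assms e1 e2 by (auto simp: pairs_def)
  define \<tau> where "\<tau> = sw (sw x z y) w \<circ> sw x z"
  have "inj \<tau>" unfolding \<tau>_def by (intro inj_compose sw_inj)
  moreover have "\<tau> ` {..<N} \<subseteq> {..<N}" using lt by (auto simp: \<tau>_def sw_def)
  moreover have "\<tau> x = z" "\<tau> y = w" using e1 e2 by (auto simp: \<tau>_def sw_def)
  then have "\<tau> ` e1 = e2" using e1 e2 by auto
  ultimately show ?thesis by blast
qed

lemma count_le:
  assumes a: "a \<in> pairs m" and e: "e1 \<in> pairs N" "e2 \<in> pairs N"
  shows "card {q\<in>injs N m. q ` a = e1} \<le> card {q\<in>injs N m. q ` a = e2}"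
proof -
  obtain \<tau> where t: "inj \<tau>" "\<tau> ` {..<N} \<subseteq> {..<N}" "\<tau> ` e1 = e2" using pairs_perm[OF e] by blast
  have asub: "a \<subseteq> {..<m}" using a by (auto simp: pairs_def)
  let ?F = "\<lambda>q. restrict (\<tau> \<circ> q) {..<m}"
  show ?thesis
  proof (rule card_inj_on_le)
    show "finite {q\<in>injs N m. q ` a = e2}" using finite_injs by simp
    show "inj_on ?F {q\<in>injs N m. q ` a = e1}"
    proof (rule inj_onI)
      fix q q' assume q: "q \<in> {q\<in>injs N m. q ` a = e1}" and q': "q' \<in> {q\<in>injs N m. q ` a = e1}"
        and eq: "?F q = ?F q'"
      show "q = q'"
      proof (rule extensionalityI)
        show "q \<in> extensional {..<m}" "q' \<in> extensional {..<m}" using q q' by (auto simp: injs_def PiE_def)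
        fix x assume "x \<in> {..<m}"
        then have "\<tau> (q x) = \<tau> (q' x)" using eq by (metis comp_apply restrict_apply')
        then show "q x = q' x" using t(1) by (simp add: inj_eq)
      qed
    qed
    show "?F ` {q\<in>injs N m. q ` a = e1} \<subseteq> {q\<in>injs N m. q ` a = e2}"
    proof (rule image_subsetI)
      fix q assume q: "q \<in> {q\<in>injs N m. q ` a = e1}"
      have "?F q \<in> {..<m} \<rightarrow>\<^sub>E {..<N}" using q t(2) by (auto simp: injs_def PiE_iff)
      moreover have "inj_on (?F q) {..<m}"
      proof -
        have "inj_on (\<tau> \<circ> q) {..<m}" using q t(1) by (auto simp: injs_def intro: comp_inj_on inj_on_subset)
        then show ?thesis by (simp add: inj_on_def)
      qed
      moreover have "?F q ` a = e2"
      proof -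
        have "?F q ` a = \<tau> ` (q ` a)" using asub by (auto simp: image_comp)
        then show ?thesis using q t(3) by simp
      qed
      ultimately show "?F q \<in> {q\<in>injs N m. q ` a = e2}" by (simp add: injs_def)
    qed
  qed
qed

lemma count_sum:
  assumes a: "a \<in> pairs m" and mN: "m \<le> N"
  shows "real N * (real N - 1) * (\<Sum>q\<in>injs N m. h (q ` a))
       = 2 * (\<Prod>k<m. real N - real k) * (\<Sum>e\<in>pairs N. h e)"
proof -
  define c where "c e = card {q\<in>injs N m. q ` a = e}" for e
  have e0: "{0, 1} \<in> pairs N"
  proof -
    have "card a \<le> card {..<m}" using a by (intro card_mono) (auto simp: pairs_def)
    then have "2 \<le> N" using a mN by (simp add: pairs_def)
    then show ?thesis by (auto simp: pairs_def)
  qed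
  have cc: "c e = c {0,1}" if "e \<in> pairs N" for e
    using count_le[OF a that e0] count_le[OF a e0 that] unfolding c_def by simp
  have img: "(\<lambda>q. q ` a) ` injs N m \<subseteq> pairs N" using img_pairs[OF a] by auto
  have "(\<Sum>q\<in>injs N m. h (q ` a)) = (\<Sum>e\<in>pairs N. \<Sum>q\<in>{q\<in>injs N m. q ` a = e}. h (q ` a))"
    using sum.group[OF finite_injs finite_pairs img, of "\<lambda>q. h (q ` a)"] by simp
  also have "\<dots> = (\<Sum>e\<in>pairs N. real (c e) * h e)"
    by (rule sum.cong) (auto simp: c_def)
  also have "\<dots> = real (c {0,1}) * (\<Sum>e\<in>pairs N. h e)"
    by (simp add: cc sum_distrib_left)
  finally have s1: "(\<Sum>q\<in>injs N m. h (q ` a)) = real (c {0,1}) * (\<Sum>e\<in>pairs N. h e)" .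
  have "card (injs N m) = (\<Sum>e\<in>pairs N. card {q\<in>injs N m. q ` a = e})"
    using sum.group[OF finite_injs finite_pairs img, of "\<lambda>q. 1::nat"] by simp
  also have "\<dots> = c {0,1} * card (pairs N)" using cc by (simp add: c_def)
  finally have s2: "card (injs N m) = c {0,1} * card (pairs N)" .
  have "card (pairs N) = N choose 2" unfolding pairs_def using n_subsets[of "{..<N}" 2] by simp
  moreover have "2 * (N choose 2) = N * (N - 1)"
  proof -
    have "even (N * (N - 1))" by (cases N) auto
    then show ?thesis unfolding choose_two by simp
  qed
  ultimately have "2 * card (pairs N) = N * (N - 1)" by simp
  then have "real (2 * card (pairs N)) = real (N * (N - 1))" by (simp only:)
  then have s3: "2 * real (card (pairs N)) = real N * (real N - 1)"
    by (cases N) (auto simp: algebra_simps)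
  have s4: "real (card (injs N m)) = (\<Prod>k<m. real N - real k)"
    using mN by (simp add: card_injs of_nat_prod of_nat_diff)
  show ?thesis
    unfolding s1 s4[symmetric] s3[symmetric] s2 by simp
qed

lemma aux:
  fixes a b c d :: real
  shows "\<bar>(a - b) / 2 - (c - d) / 2\<bar> \<le> (\<bar>a - c\<bar> + \<bar>b - d\<bar>) / 2"
proof -
  have e: "(a - b) / 2 - (c - d) / 2 = ((a - c) - (b - d)) / 2" by (simp add: field_simps)
  show ?thesis unfolding e using abs_triangle_ineq4[of "a - c" "b - d"] by simp
qed

lemma per_q:
  assumes E: "E \<subseteq> pairs m" and q: "q \<in> injs N m"
    and X: "in_cube N X" and Y: "in_cube N Y"
  shows "(\<Sum>e\<in>pairs N. \<bar>(PP E q (X(e:=1)) - PP E q (X(e:=0))) / 2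
                         - (PP E q (Y(e:=1)) - PP E q (Y(e:=0))) / 2\<bar>)
         \<le> real (card E) * (\<Sum>a\<in>E. \<bar>X (q ` a) - Y (q ` a)\<bar>)"
proof -
  define F where "F e = \<bar>(PP E q (X(e:=1)) - PP E q (X(e:=0))) / 2
                         - (PP E q (Y(e:=1)) - PP E q (Y(e:=0))) / 2\<bar>" for e
  define S where "S = (\<Sum>a\<in>E. \<bar>X (q ` a) - Y (q ` a)\<bar>)"
  have finE: "finite E" using E finite_pairs by (rule finite_subset)
  have gp: "q ` a \<in> pairs N" if "a \<in> E" for a using img_pairs[OF _ q] E that by auto
  have G: "(\<lambda>a. q ` a) ` E \<subseteq> pairs N" using gp by auto
  have zero: "F e = 0" if "e \<notin> (\<lambda>a. q ` a) ` E" for e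
  proof -
    have "PP E q (Z(e:=c)) = PP E q Z" for Z c
      unfolding PP_def using that by (intro prod.cong) auto
    then show ?thesis by (simp add: F_def)
  qed
  have bnd: "F e \<le> S" if "e \<in> pairs N" for e
  proof -
    have d: "\<bar>PP E q (X(e:=c)) - PP E q (Y(e:=c))\<bar> \<le> S" if c: "c = 0 \<or> c = 1" for c :: real
    proof -
      have "\<bar>PP E q (X(e:=c)) - PP E q (Y(e:=c))\<bar>
          \<le> (\<Sum>a\<in>E. norm ((X(e:=c)) (q ` a) - (Y(e:=c)) (q ` a)))"
        unfolding PP_def real_norm_def[symmetric]
      proof (rule norm_prod_diff)
        fix a assume "a \<in> E"
        then have "q ` a \<in> pairs N" by (rule gp)
        then show "norm ((X(e:=c)) (q ` a)) \<le> 1" "norm ((Y(e:=c)) (q ` a)) \<le> 1"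
          using X Y c by (auto simp: in_cube_def)
      qed
      also have "\<dots> \<le> S" unfolding S_def
        by (intro sum_mono) auto
      finally show ?thesis .
    qed
    have "F e \<le> (\<bar>PP E q (X(e:=1)) - PP E q (Y(e:=1))\<bar> + \<bar>PP E q (X(e:=0)) - PP E q (Y(e:=0))\<bar>) / 2"
      unfolding F_def by (rule aux)
    also have "\<dots> \<le> S" using d[of 0] d[of 1] by simp
    finally show ?thesis .
  qed
  have "(\<Sum>e\<in>pairs N. F e) = (\<Sum>e\<in>(\<lambda>a. q ` a) ` E. F e)"
    using finite_pairs G zero by (intro sum.mono_neutral_right) auto
  also have "\<dots> \<le> (\<Sum>a\<in>E. F (q ` a))"
    using sum_image_le[OF finE, of F "\<lambda>a. q ` a"] by (simp add: F_def o_def)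
  also have "\<dots> \<le> (\<Sum>a\<in>E. S)" using bnd gp by (intro sum_mono) auto
  also have "\<dots> = real (card E) * S" by simp
  finally show ?thesis unfolding F_def S_def .
qed

lemma per_i:
  assumes E: "E \<subseteq> pairs m" and h: "\<And>e. 0 \<le> h e"
  shows "real N * (real N - 1) * \<bar>1 / (\<Prod>k<m. real N - real k)\<bar>
           * (\<Sum>q\<in>injs N m. \<Sum>a\<in>E. h (q ` a))
         \<le> 2 * real (card E) * (\<Sum>e\<in>pairs N. h e)"
proof (cases "m \<le> N")
  case True
  have pos: "(\<Prod>k<m. real N - real k) > 0" using True by (intro prod_pos) auto
  have "real N * (real N - 1) * (\<Sum>q\<in>injs N m. \<Sum>a\<in>E. h (q ` a))
      = (\<Sum>a\<in>E. real N * (real N - 1) * (\<Sum>q\<in>injs N m. h (q ` a)))"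
    by (simp add: sum.swap[of _ "injs N m"] sum_distrib_left)
  also have "\<dots> = (\<Sum>a\<in>E. 2 * (\<Prod>k<m. real N - real k) * (\<Sum>e\<in>pairs N. h e))"
    using E True by (intro sum.cong refl count_sum) auto
  also have "\<dots> = (\<Prod>k<m. real N - real k) * (2 * real (card E) * (\<Sum>e\<in>pairs N. h e))"
    by simp
  finally have eq: "real N * (real N - 1) * (\<Sum>q\<in>injs N m. \<Sum>a\<in>E. h (q ` a))
      = (\<Prod>k<m. real N - real k) * (2 * real (card E) * (\<Sum>e\<in>pairs N. h e))" .
  have "real N * (real N - 1) * \<bar>1 / (\<Prod>k<m. real N - real k)\<bar> * (\<Sum>q\<in>injs N m. \<Sum>a\<in>E. h (q ` a))
      = (real N * (real N - 1) * (\<Sum>q\<in>injs N m. \<Sum>a\<in>E. h (q ` a))) / (\<Prod>k<m. real N - real k)"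
    using pos by simp
  also have "\<dots> = 2 * real (card E) * (\<Sum>e\<in>pairs N. h e)" unfolding eq
    by (rule nonzero_mult_div_cancel_left) (metis pos less_irrefl)
  finally show ?thesis by (rule eq_refl)
next
  case False
  have "injs N m = {}"
  proof (rule ccontr)
    assume "injs N m \<noteq> {}"
    then obtain q where q: "q \<in> injs N m" by auto
    have "card {..<m} \<le> card {..<N}"
      using q by (intro card_inj[of q]) (auto simp: injs_def PiE_iff)
    then show False using False by simp
  qed
  moreover have "0 \<le> (\<Sum>e\<in>pairs N. h e)" using h by (simp add: sum_nonneg)
  ultimately show ?thesis by simp
qed

theorem lemma28:
  fixes N l :: nat and \<beta> :: "nat \<Rightarrow> real" and m :: "nat \<Rightarrow> nat"
    and EH :: "nat \<Rightarrow> nat set set" and X Y :: "nat set \<Rightarrow> real"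
  assumes "\<forall>i<l. simple_graph (m i) (EH i)"
    and "in_cube N X" and "in_cube N Y"
  shows "l1_dist N (\<lambda>e. discrete_partial (subgraph_count N l \<beta> m EH) e X)
                   (\<lambda>e. discrete_partial (subgraph_count N l \<beta> m EH) e Y)
         \<le> (12 * (\<Sum>i<l. \<bar>\<beta> i\<bar> * real (card (EH i))^2)) * l1_dist N X Y"
proof -
  define K where "K = real N * (real N - 1)"
  define D where "D i = (\<Prod>k<m i. real N - real k)" for i
  define dq where "dq i q e Z = (PP (EH i) q (Z(e:=1)) - PP (EH i) q (Z(e:=0))) / 2" for i q e Z
  define T where "T i q e = dq i q e X - dq i q e Y" for i q e
  define h where "h e = \<bar>X e - Y e\<bar>" for e
  define f where "f = subgraph_count N l \<beta> m EH"
  have K0: "0 \<le> K" unfolding K_def by (cases N) auto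
  have fZ: "f Z = K * (\<Sum>i<l. \<beta> i / D i * (\<Sum>q\<in>injs N (m i). PP (EH i) q Z))" for Z
    by (simp add: f_def subgraph_count_def tdens_eq K_def D_def)
  have dpZ: "discrete_partial f e Z = K * (\<Sum>i<l. \<beta> i / D i * (\<Sum>q\<in>injs N (m i). dq i q e Z))" for e Z
  proof -
    have a: "f (Z(e:=1)) - f (Z(e:=0)) = K * (\<Sum>i<l. \<beta> i / D i *
        ((\<Sum>q\<in>injs N (m i). PP (EH i) q (Z(e:=1))) - (\<Sum>q\<in>injs N (m i). PP (EH i) q (Z(e:=0)))))"
      unfolding fZ by (simp only: right_diff_distrib[symmetric] sum_subtractf[symmetric])
    have b: "(\<Sum>q\<in>injs N (m i). PP (EH i) q (Z(e:=1))) - (\<Sum>q\<in>injs N (m i). PP (EH i) q (Z(e:=0)))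
        = 2 * (\<Sum>q\<in>injs N (m i). dq i q e Z)" for i
      by (simp add: dq_def sum_subtractf[symmetric] sum_divide_distrib[symmetric])
    have c: "(\<Sum>i<l. \<beta> i / D i * (2 * (\<Sum>q\<in>injs N (m i). dq i q e Z)))
        = 2 * (\<Sum>i<l. \<beta> i / D i * (\<Sum>q\<in>injs N (m i). dq i q e Z))"
      by (simp add: sum_distrib_left algebra_simps)
    show ?thesis unfolding discrete_partial_def a b c by simp
  qed
  have pt: "\<bar>discrete_partial f e X - discrete_partial f e Y\<bar>
      \<le> (\<Sum>i<l. K * \<bar>\<beta> i\<bar> * \<bar>1 / D i\<bar> * (\<Sum>q\<in>injs N (m i). \<bar>T i q e\<bar>))" for e
  proof -
    have "discrete_partial f e X - discrete_partial f e Y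
        = (\<Sum>i<l. K * (\<beta> i * (1 / D i)) * (\<Sum>q\<in>injs N (m i). T i q e))"
      unfolding dpZ T_def
      by (simp add: sum_subtractf[symmetric] right_diff_distrib[symmetric] sum_distrib_left algebra_simps)
    also have "\<bar>\<dots>\<bar> \<le> (\<Sum>i<l. \<bar>K * (\<beta> i * (1 / D i)) * (\<Sum>q\<in>injs N (m i). T i q e)\<bar>)"
      by (rule sum_abs)
    also have "\<dots> \<le> (\<Sum>i<l. K * \<bar>\<beta> i\<bar> * \<bar>1 / D i\<bar> * (\<Sum>q\<in>injs N (m i). \<bar>T i q e\<bar>))"
    proof (rule sum_mono)
      fix i
      have "\<bar>K * (\<beta> i * (1 / D i)) * (\<Sum>q\<in>injs N (m i). T i q e)\<bar>
          = K * \<bar>\<beta> i\<bar> * \<bar>1 / D i\<bar> * \<bar>\<Sum>q\<in>injs N (m i). T i q e\<bar>"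
        using K0 by (simp add: abs_mult)
      also have "\<dots> \<le> K * \<bar>\<beta> i\<bar> * \<bar>1 / D i\<bar> * (\<Sum>q\<in>injs N (m i). \<bar>T i q e\<bar>)"
        using K0 by (intro mult_left_mono sum_abs) auto
      finally show "\<bar>K * (\<beta> i * (1 / D i)) * (\<Sum>q\<in>injs N (m i). T i q e)\<bar>
          \<le> K * \<bar>\<beta> i\<bar> * \<bar>1 / D i\<bar> * (\<Sum>q\<in>injs N (m i). \<bar>T i q e\<bar>)" .
    qed
    finally show ?thesis .
  qed
  have "l1_dist N (\<lambda>e. discrete_partial f e X) (\<lambda>e. discrete_partial f e Y)
      \<le> (\<Sum>e\<in>pairs N. \<Sum>i<l. K * \<bar>\<beta> i\<bar> * \<bar>1 / D i\<bar> * (\<Sum>q\<in>injs N (m i). \<bar>T i q e\<bar>))"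
    unfolding l1_dist_def by (intro sum_mono pt)
  also have "\<dots> = (\<Sum>i<l. K * \<bar>\<beta> i\<bar> * \<bar>1 / D i\<bar> * (\<Sum>q\<in>injs N (m i). \<Sum>e\<in>pairs N. \<bar>T i q e\<bar>))"
    by (simp add: sum.swap[of _ "pairs N"] sum_distrib_left)
  also have "\<dots> \<le> (\<Sum>i<l. K * \<bar>\<beta> i\<bar> * \<bar>1 / D i\<bar> *
                 (\<Sum>q\<in>injs N (m i). real (card (EH i)) * (\<Sum>a\<in>EH i. h (q ` a))))"
  proof (rule sum_mono)
    fix i assume i: "i \<in> {..<l}"
    have E: "EH i \<subseteq> pairs (m i)" using assms(1) i by (simp add: simple_graph_def)
    have "(\<Sum>q\<in>injs N (m i). \<Sum>e\<in>pairs N. \<bar>T i q e\<bar>)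
        \<le> (\<Sum>q\<in>injs N (m i). real (card (EH i)) * (\<Sum>a\<in>EH i. h (q ` a)))"
      unfolding T_def dq_def h_def using per_q[OF E _ assms(2,3)] by (intro sum_mono) auto
    then show "K * \<bar>\<beta> i\<bar> * \<bar>1 / D i\<bar> * (\<Sum>q\<in>injs N (m i). \<Sum>e\<in>pairs N. \<bar>T i q e\<bar>)
        \<le> K * \<bar>\<beta> i\<bar> * \<bar>1 / D i\<bar> *
                 (\<Sum>q\<in>injs N (m i). real (card (EH i)) * (\<Sum>a\<in>EH i. h (q ` a)))"
      using K0 by (intro mult_left_mono) auto
  qed
  also have "\<dots> \<le> (\<Sum>i<l. \<bar>\<beta> i\<bar> * real (card (EH i)) * (2 * real (card (EH i)) * l1_dist N X Y))"
  proof (rule sum_mono)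
    fix i assume i: "i \<in> {..<l}"
    have E: "EH i \<subseteq> pairs (m i)" using assms(1) i by (simp add: simple_graph_def)
    have "K * \<bar>1 / D i\<bar> * (\<Sum>q\<in>injs N (m i). \<Sum>a\<in>EH i. h (q ` a))
        \<le> 2 * real (card (EH i)) * (\<Sum>e\<in>pairs N. h e)"
      unfolding K_def D_def by (rule per_i[OF E]) (simp add: h_def)
    then have "\<bar>\<beta> i\<bar> * real (card (EH i)) * (K * \<bar>1 / D i\<bar> * (\<Sum>q\<in>injs N (m i). \<Sum>a\<in>EH i. h (q ` a)))
        \<le> \<bar>\<beta> i\<bar> * real (card (EH i)) * (2 * real (card (EH i)) * l1_dist N X Y)"
      by (intro mult_left_mono) (auto simp: l1_dist_def h_def)
    then show "K * \<bar>\<beta> i\<bar> * \<bar>1 / D i\<bar> *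
                 (\<Sum>q\<in>injs N (m i). real (card (EH i)) * (\<Sum>a\<in>EH i. h (q ` a)))
        \<le> \<bar>\<beta> i\<bar> * real (card (EH i)) * (2 * real (card (EH i)) * l1_dist N X Y)"
      by (simp add: sum_distrib_left[symmetric] algebra_simps)
  qed
  also have "\<dots> \<le> (\<Sum>i<l. 12 * (\<bar>\<beta> i\<bar> * real (card (EH i))^2 * l1_dist N X Y))"
  proof (rule sum_mono)
    fix i
    have l0: "0 \<le> l1_dist N X Y" by (simp add: l1_dist_def sum_nonneg)
    have "0 \<le> \<bar>\<beta> i\<bar> * real (card (EH i))^2 * l1_dist N X Y" using l0 by simp
    then show "\<bar>\<beta> i\<bar> * real (card (EH i)) * (2 * real (card (EH i)) * l1_dist N X Y)
        \<le> 12 * (\<bar>\<beta> i\<bar> * real (card (EH i))^2 * l1_dist N X Y)"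
      by (simp add: power2_eq_square algebra_simps)
  qed
  also have "\<dots> = (12 * (\<Sum>i<l. \<bar>\<beta> i\<bar> * real (card (EH i))^2)) * l1_dist N X Y"
    by (simp add: sum_distrib_left sum_distrib_right algebra_simps)
  finally show ?thesis unfolding f_def .
qed

end
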